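(* For every $n\ge 3$, if $P$ is chosen uniformly at random from $\mathrm{Motz}^{\{1,2\}}(n)$, then the expected number of up steps and the expected number of down steps of $P$ both equal $\dfrac{n^2+n-6}{4n-6}$, and the expected number of umber steps and the expected number of denim steps both equal $\dfrac{n^2-4n+6}{4n-6}$.
   Context: $\mathrm{Motz}^{\{1,2\}}(n)$ is the set of lattice paths from $(0,0)$ to $(n,0)$ with steps $U=(1,1)$, $D=(1,-1)$ and horizontal steps $(1,0)$ colored umber or denim, never going below the $x$-axis, such that no umber step occurs at height $0$ and no denim step occurs before the first down step. *)

theory Defs
  imports Complex_Main
begin

text \<open>Steps: U = (1,1), D = (1,-1), Hu = umber horizontal, Hd = denim horizontal.\<close>
datatype step = U | D | Hu | Hd

fun delta :: "step \<Rightarrow> int" where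
  "delta U = 1" | "delta D = -1" | "delta Hu = 0" | "delta Hd = 0"

definition ht :: "step list \<Rightarrow> int" where
  "ht P = sum_list (map delta P)"

text \<open>Motz^{1,2}(n): paths of length n from (0,0) to (n,0), never below the x-axis,
  no umber step at height 0 (the height at which the horizontal step is taken),
  no denim step before the first down step.\<close>
definition motz12 :: "nat \<Rightarrow> step list set" where
  "motz12 n = {P. length P = n \<and> ht P = 0
     \<and> (\<forall>k\<le>length P. ht (take k P) \<ge> 0)
     \<and> (\<forall>k<length P. P ! k = Hu \<longrightarrow> ht (take k P) \<noteq> 0)
     \<and> (\<forall>k<length P. P ! k = Hd \<longrightarrow> D \<in> set (take k P))}"

definition nsteps :: "step \<Rightarrow> step list \<Rightarrow> nat" where
  "nsteps s P = length (filter (\<lambda>x. x = s) P)"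

definition expected_steps :: "step \<Rightarrow> nat \<Rightarrow> real" where
  "expected_steps s n = (\<Sum>P\<in>motz12 n. real (nsteps s P)) / real (card (motz12 n))"

end

theory Submission
  imports Defs
begin


definition cb :: "int \<Rightarrow> int \<Rightarrow> real" where
  "cb L k = (if k < 0 then 0 else (real_of_int L) gchoose (nat k))"

lemma cb_neg[simp]: "k < 0 \<Longrightarrow> cb L k = 0" by (simp add: cb_def)

lemma cb_pascal: "cb (L+1) k = cb L k + cb L (k-1)"
proof (cases "k < 0")
  case True then show ?thesis by simp
next
  case False
  show ?thesis
  proof (cases "k = 0")
    case True then show ?thesis by (simp add: cb_def)
  next
    case False
    with \<open>\<not> k < 0\<close> have "0 < k" by simp
    then obtain n where n: "k = int n" "0 < n" using pos_int_cases by blast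
    then obtain j where j: "k = int (Suc j)" using not0_implies_Suc by blast 
    have nk: "nat k = Suc j" "nat (k - 1) = j" using j by auto
    have "cb (L+1) k = (real_of_int L + 1) gchoose (Suc j)" using j nk by (simp add: cb_def)
    also have "\<dots> = (real_of_int L gchoose j) + (real_of_int L gchoose Suc j)" by (rule gbinomial_Suc_Suc)
    also have "\<dots> = cb L k + cb L (k-1)" using j nk by (simp add: cb_def)
    finally show ?thesis .
  qed
qed

lemma cb2: "L' = L + 2 \<Longrightarrow> cb L' k = cb L k + 2 * cb L (k-1) + cb L (k-2)"
  using cb_pascal[of "L+1" k] cb_pascal[of L k] cb_pascal[of L "k-1"]
  by (simp add: algebra_simps)



fun vld :: "bool \<Rightarrow> nat \<Rightarrow> step list \<Rightarrow> bool" where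
  "vld s h [] = (h = 0)"
| "vld s h (U#P) = vld s (Suc h) P"
| "vld s h (D#P) = (0 < h \<and> vld True (h-1) P)"
| "vld s h (Hu#P) = (0 < h \<and> vld s h P)"
| "vld s h (Hd#P) = (s \<and> vld s h P)"

lemma ht_Nil[simp]: "ht [] = 0" by (simp add: ht_def)
lemma ht_Cons[simp]: "ht (x#P) = delta x + ht P" by (simp add: ht_def)

lemma all_le_Suc: "(\<forall>k\<le>Suc n. Q k) \<longleftrightarrow> Q 0 \<and> (\<forall>k\<le>n. Q (Suc k))"
  by (metis Suc_le_mono le0 not0_implies_Suc)
lemma all_less_Suc: "(\<forall>k<Suc n. Q k) \<longleftrightarrow> Q 0 \<and> (\<forall>k<n. Q (Suc k))"
  by (metis Suc_less_eq not0_implies_Suc zero_less_Suc)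

definition cond :: "bool \<Rightarrow> nat \<Rightarrow> step list \<Rightarrow> bool" where
 "cond s h P \<longleftrightarrow> int h + ht P = 0
     \<and> (\<forall>k\<le>length P. int h + ht (take k P) \<ge> 0)
     \<and> (\<forall>k<length P. P ! k = Hu \<longrightarrow> int h + ht (take k P) \<noteq> 0)
     \<and> (\<forall>k<length P. P ! k = Hd \<longrightarrow> s \<or> D \<in> set (take k P))"

lemma cond_Nil: "cond s h [] \<longleftrightarrow> h = 0" by (simp add: cond_def)

lemma cond_Cons: "cond s h (x#P) \<longleftrightarrow>
   (case x of U \<Rightarrow> cond s (Suc h) P | D \<Rightarrow> 0 < h \<and> cond True (h-1) P
    | Hu \<Rightarrow> 0 < h \<and> cond s h P | Hd \<Rightarrow> s \<and> cond s h P)"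
proof (cases x)
  case U
  then show ?thesis unfolding cond_def
    by (simp add: all_le_Suc all_less_Suc algebra_simps)
next
  case D
  show ?thesis
  proof (cases "0 < h")
    case True
    then have "int (h - 1) = int h - 1" by simp
    then show ?thesis using D True unfolding cond_def
      by (simp add: all_le_Suc all_less_Suc algebra_simps)
  next
    case False
    then have "\<not> (\<forall>k\<le>length (x#P). int h + ht (take k (x#P)) \<ge> 0)"
      using D by (auto intro!: exI[of _ 1])
    then show ?thesis using False D unfolding cond_def by auto
  qed
next
  case Hu
  then show ?thesis unfolding cond_def
    by (auto simp add: all_le_Suc all_less_Suc algebra_simps)
next
  case Hd
  then show ?thesis unfolding cond_def
    by (auto simp add: all_le_Suc all_less_Suc algebra_simps)
qed

lemma vld_cond: "vld s h P \<longleftrightarrow> cond s h P"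
proof (induction P arbitrary: s h)
  case Nil
  then show ?case by (simp add: cond_Nil)
next
  case (Cons x P)
  then show ?case by (cases x) (simp_all add: cond_Cons)
qed

definition S :: "bool \<Rightarrow> nat \<Rightarrow> nat \<Rightarrow> step list set" where
  "S s h m = {P. length P = m \<and> vld s h P}"

lemma motz12_S: "motz12 n = S False 0 n"
  unfolding motz12_def S_def by (auto simp: vld_cond cond_def)

lemma UNIV_step: "(UNIV :: step set) = {U, D, Hu, Hd}"
  using step.exhaust by auto

lemma finite_S[simp]: "finite (S s h m)"
proof -
  have "S s h m \<subseteq> {P. set P \<subseteq> UNIV \<and> length P = m}" unfolding S_def by auto
  moreover have "finite {P. set P \<subseteq> (UNIV :: step set) \<and> length P = m}"
    by (rule finite_lists_length_eq) (simp add: UNIV_step)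
  ultimately show ?thesis by (rule finite_subset)
qed

lemma S_0: "S s h 0 = (if h = 0 then {[]} else {})"
  unfolding S_def by auto

lemma S_Suc: "S s h (Suc m) = Cons U ` S s (Suc h) m
   \<union> (if 0<h then Cons D ` S True (h-1) m else {})
   \<union> (if 0<h then Cons Hu ` S s h m else {})
   \<union> (if s then Cons Hd ` S s h m else {})"
proof (rule set_eqI)
  fix P
  show "P \<in> S s h (Suc m) \<longleftrightarrow> P \<in> Cons U ` S s (Suc h) m
   \<union> (if 0<h then Cons D ` S True (h-1) m else {})
   \<union> (if 0<h then Cons Hu ` S s h m else {})
   \<union> (if s then Cons Hd ` S s h m else {})"
  proof (cases P)
    case Nil then show ?thesis unfolding S_def by auto
  next
    case (Cons x Q)
    then show ?thesis unfolding S_def by (cases x) auto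
  qed
qed

lemma sum_Cons_img: "sum g (Cons x ` A) = sum (\<lambda>P. g (x#P)) A"
  by (simp add: sum.reindex inj_on_def o_def)

lemma Cons_disj: "x \<noteq> y \<Longrightarrow> Cons x ` A \<inter> Cons y ` B = {}" by auto

lemma sum_S_Suc: fixes g :: "step list \<Rightarrow> real" shows
  "sum g (S s h (Suc m)) = sum (\<lambda>P. g (U#P)) (S s (Suc h) m)
   + (if 0<h then sum (\<lambda>P. g (D#P)) (S True (h-1) m) else 0)
   + (if 0<h then sum (\<lambda>P. g (Hu#P)) (S s h m) else 0)
   + (if s then sum (\<lambda>P. g (Hd#P)) (S s h m) else 0)"
  unfolding S_Suc
  by (cases "0<h"; cases s; simp add: sum.union_disjoint sum_Cons_img Int_Un_distrib2 Cons_disj finite_imageI)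



definition fN1 :: "int \<Rightarrow> int \<Rightarrow> real" where "fN1 x i = cb (2*x) i - cb (2*x) (i-1)"
definition fU1 :: "int \<Rightarrow> int \<Rightarrow> real \<Rightarrow> real" where
  "fU1 x i y = (y+1) * cb (2*x-2) (i-2) + y * cb (2*x-2) (i-3)"
definition fD1 :: "int \<Rightarrow> int \<Rightarrow> real" where "fD1 x i = cb (2*x-1) (i-1) - cb (2*x-1) (i-2)"
definition fN0 :: "int \<Rightarrow> int \<Rightarrow> real" where "fN0 x i = cb (2*x-1) i - cb (2*x-1) (i-1)"
definition fU0 :: "int \<Rightarrow> int \<Rightarrow> real \<Rightarrow> real" where
  "fU0 x i y = (y+1) * cb (2*x-3) (i-2) + (y-1) * cb (2*x-3) (i-3)"

lemma cb_nat: assumes "0 \<le> L" "0 \<le> k" shows "cb L k = real (nat L choose nat k)"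
proof -
  have "real_of_int L = real (nat L)" using assms by simp
  then show ?thesis using assms by (simp add: cb_def binomial_gbinomial)
qed

lemma cb_sym: assumes "0 \<le> x" shows "cb (2*x) (x+1) = cb (2*x) (x-1)"
proof (cases "x = 0")
  case True then show ?thesis by (simp add: cb_def)
next
  case False
  then have x1: "1 \<le> x" using assms by simp
  have "cb (2*x) (x+1) = real (nat (2*x) choose nat (x+1))" using assms by (simp add: cb_nat)
  also have "nat (2*x) choose nat (x+1) = nat (2*x) choose (nat (2*x) - nat (x+1))"
    by (rule binomial_symmetric) (use x1 in simp)
  also have "nat (2*x) - nat (x+1) = nat (x - 1)" using x1 by simp
  also have "real (nat (2*x) choose nat (x - 1)) = cb (2*x) (x-1)" using x1 by (simp add: cb_nat)
  finally show ?thesis .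
qed

lemma recN1: "fN1 (x+1) (i+1) = fN1 x (i-1) + fN1 x (i+1) + 2*fN1 x i"
  using cb2[of "2*(x+1)" "2*x" "i+1"] cb2[of "2*(x+1)" "2*x" "i"]
  unfolding fN1_def by (simp add: algebra_simps)

lemma recU1: "fU1 (x+1) (i+1) y = fU1 x (i-1) (y+1) + fN1 x (i-1) + fU1 x (i+1) (y-1) + 2*fU1 x i y"
  using cb2[of "2*(x+1)-2" "2*x-2" "i+1-2"] cb2[of "2*(x+1)-2" "2*x-2" "i+1-3"]
        cb2[of "2*x" "2*x-2" "i-1"] cb2[of "2*x" "2*x-2" "i-1-1"]
  unfolding fN1_def fU1_def by (simp add: algebra_simps)

lemma recD1: "fD1 (x+1) (i+1) = fD1 x (i-1) + fD1 x (i+1) + 2*fD1 x i"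
  using cb2[of "2*(x+1)-1" "2*x-1" "i+1-1"] cb2[of "2*(x+1)-1" "2*x-1" "i+1-2"]
  unfolding fD1_def by (simp add: algebra_simps)

lemma recN1_0: assumes "0 \<le> x" shows "fN1 (x+1) (x+1) = fN1 x (x-1) + fN1 x x"
  using cb2[of "2*(x+1)" "2*x" "x+1"] cb2[of "2*(x+1)" "2*x" "x"] cb_sym[OF assms]
  unfolding fN1_def by (simp add: algebra_simps)

lemma recU1_0: "fU1 (x+1) (x+1) 0 = fU1 x (x-1) 1 + fN1 x (x-1) + fU1 x x 0"
  using cb2[of "2*(x+1)-2" "2*x-2" "x+1-2"] 
        cb2[of "2*x" "2*x-2" "x-1"] cb2[of "2*x" "2*x-2" "x-1-1"]
  unfolding fN1_def fU1_def by (simp add: algebra_simps)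

lemma recD1_0: "fD1 (x+1) (x+1) = fD1 x (x-1) + fD1 x x + fN1 x x"
  using cb2[of "2*(x+1)-1" "2*x-1" "x+1-1"] cb2[of "2*(x+1)-1" "2*x-1" "x+1-2"]
    cb_pascal[of "2*x-1" x] cb_pascal[of "2*x-1" "x-1"]
  unfolding fD1_def fN1_def by (simp add: algebra_simps)

lemma recN0: "fN0 (x+1) (i+1) = fN0 x (i-1) + fN1 x (i+1) + fN0 x i"
  using cb2[of "2*(x+1)-1" "2*x-1" "i+1"] cb2[of "2*(x+1)-1" "2*x-1" "i"]
    cb_pascal[of "2*x-1" "i+1"] cb_pascal[of "2*x-1" "i"]
  unfolding fN0_def fN1_def by (simp add: algebra_simps)

lemma recU0: "fU0 (x+1) (i+1) y = fU0 x (i-1) (y+1) + fN0 x (i-1) + fU1 x (i+1) (y-1) + fU0 x i y"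
  using cb2[of "2*(x+1)-3" "2*x-3" "i+1-2"] cb2[of "2*(x+1)-3" "2*x-3" "i+1-3"]
    cb2[of "2*x-1" "2*x-3" "i-1"] cb2[of "2*x-1" "2*x-3" "i-1-1"]
    cb_pascal[of "2*x-3" "i+1-2"] cb_pascal[of "2*x-3" "i+1-3"]
  unfolding fN0_def fU0_def fU1_def by (simp add: algebra_simps)

lemma recD0: "fD1 x (i+1) = fN0 x i"
  unfolding fD1_def fN0_def by simp



lemma nsteps_Nil[simp]: "nsteps x [] = 0" by (simp add: nsteps_def)
lemma nsteps_Cons[simp]: "nsteps x (y#P) = (if y = x then Suc (nsteps x P) else nsteps x P)"
  by (simp add: nsteps_def)

definition cnt where "cnt s h m = sum (\<lambda>_. 1::real) (S s h m)"
definition su where "su s h m = sum (\<lambda>P. real (nsteps U P)) (S s h m)"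
definition dl where "dl s h m = sum (\<lambda>P. real (nsteps Hd P) - real (nsteps Hu P)) (S s h m)"

lemma cnt_Suc: "cnt s h (Suc m) = cnt s (Suc h) m + (if 0<h then cnt True (h-1) m else 0)
   + (if 0<h then cnt s h m else 0) + (if s then cnt s h m else 0)"
  unfolding cnt_def by (rule sum_S_Suc)

lemma su_Suc: "su s h (Suc m) = su s (Suc h) m + cnt s (Suc h) m + (if 0<h then su True (h-1) m else 0)
   + (if 0<h then su s h m else 0) + (if s then su s h m else 0)"
  unfolding su_def cnt_def sum_S_Suc by (simp add: sum.distrib)

lemma dl_Suc: "dl s h (Suc m) = dl s (Suc h) m + (if 0<h then dl True (h-1) m else 0)
   + (if 0<h then dl s h m - cnt s h m else 0) + (if s then dl s h m + cnt s h m else 0)"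
  unfolding dl_def cnt_def sum_S_Suc by (simp add: sum.distrib sum_subtractf algebra_simps)

lemma state1: "cnt True h m = fN1 (int m) (int m - int h) \<and>
  su True h m = fU1 (int m) (int m - int h) (real h) \<and>
  dl True h m = fD1 (int m) (int m - int h)"
proof (induction m arbitrary: h)
  case 0
  show ?case by (cases h) (simp_all add: cnt_def su_def dl_def S_0 fN1_def fU1_def fD1_def cb_def)
next
  case (Suc m)
  show ?case
  proof (cases h)
    case 0
    have a: "cnt True h (Suc m) = fN1 (int m + 1) (int m + 1)"
      using Suc.IH[of 0] Suc.IH[of 1] recN1_0[of "int m"] 0 by (simp add: cnt_Suc)
    have b: "su True h (Suc m) = fU1 (int m + 1) (int m + 1) 0"
      using Suc.IH[of 0] Suc.IH[of 1] recU1_0[of "int m"] 0 by (simp add: su_Suc)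
    have c: "dl True h (Suc m) = fD1 (int m + 1) (int m + 1)"
      using Suc.IH[of 0] Suc.IH[of 1] recD1_0[of "int m"] 0 by (simp add: dl_Suc)
    show ?thesis using a b c 0 by (simp add: add.commute)
  next
    case (Suc g)
    let ?i = "int m - int h"
    have e: "int m - int (Suc h) = ?i - 1" "int m - int g = ?i + 1" "int (Suc m) = int m + 1"
      "int (Suc m) - int h = ?i + 1" "int m + 1 - int h = ?i + 1" "real (Suc h) = real h + 1" "real g = real h - 1"
      using Suc by auto
    have hp: "0 < h" "h - 1 = g" using Suc by auto
    note I1 = Suc.IH[of "Suc h", unfolded e] and I2 = Suc.IH[of g, unfolded e] and I3 = Suc.IH[of h]
    have a: "cnt True h (Suc m) = fN1 (int (Suc m)) (int (Suc m) - int h)"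
      unfolding e cnt_Suc using I1 I2 I3 recN1[of "int m" ?i] hp by (simp only: if_True; linarith)
    have b: "su True h (Suc m) = fU1 (int (Suc m)) (int (Suc m) - int h) (real h)"
      unfolding e su_Suc using I1 I2 I3 recU1[of "int m" ?i "real h"] hp by (simp only: if_True; linarith)
    have c: "dl True h (Suc m) = fD1 (int (Suc m)) (int (Suc m) - int h)"
      unfolding e dl_Suc using I1 I2 I3 recD1[of "int m" ?i] hp by (simp only: if_True; linarith)
    show ?thesis using a b c by simp
  qed
qed



lemma cnt_SucF: "0<h \<Longrightarrow> cnt False h (Suc m) = cnt False (Suc h) m + cnt True (h-1) m + cnt False h m"
  by (simp add: cnt_Suc)
lemma su_SucF: "0<h \<Longrightarrow> su False h (Suc m) = su False (Suc h) m + cnt False (Suc h) m + su True (h-1) m + su False h m"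
  by (simp add: su_Suc)
lemma dl_SucF: "0<h \<Longrightarrow> dl False h (Suc m) = dl False (Suc h) m + dl True (h-1) m + (dl False h m - cnt False h m)"
  by (simp add: dl_Suc)

lemma state0: "0 < h \<Longrightarrow> cnt False h m = fN0 (int m) (int m - int h) \<and>
  su False h m = fU0 (int m) (int m - int h) (real h) \<and> dl False h m = 0"
proof (induction m arbitrary: h)
  case 0
  then show ?case by (simp add: cnt_def su_def dl_def S_0 fN0_def fU0_def)
next
  case (Suc m)
  then obtain g where g: "h = Suc g" using not0_implies_Suc by blast
  let ?i = "int m - int h"
  have e: "int m - int (Suc h) = ?i - 1" "int m - int g = ?i + 1" "int (Suc m) = int m + 1"
      "int (Suc m) - int h = ?i + 1" "int m + 1 - int h = ?i + 1" "real (Suc h) = real h + 1" "real g = real h - 1"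
    using g by auto
  have hp: "0 < h" "h - 1 = g" using g by auto
  note I1 = Suc.IH[OF zero_less_Suc, of h, unfolded e] and I2 = state1[of g m, unfolded e] and I3 = Suc.IH[OF hp(1)]
  have a: "cnt False h (Suc m) = fN0 (int (Suc m)) (int (Suc m) - int h)"
    unfolding e cnt_SucF[OF hp(1)] hp(2) using I1 I2 I3 recN0[of "int m" ?i] by linarith
  have b: "su False h (Suc m) = fU0 (int (Suc m)) (int (Suc m) - int h) (real h)"
    unfolding e su_SucF[OF hp(1)] hp(2) using I1 I2 I3 recU0[of "int m" ?i "real h"] by linarith
  have c: "dl False h (Suc m) = 0"
    unfolding dl_SucF[OF hp(1)] hp(2) using I1 I2 I3 recD0[of "int m" ?i] by linarith
  show ?case using a b c by simp
qed

lemma cb_ratio: "real_of_int (k+1) * cb L (k+1) = real_of_int (L-k) * cb L k"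
proof (cases "k < 0")
  case True
  then have "k + 1 < 0 \<or> k + 1 = 0" by auto
  then show ?thesis using True by auto
next
  case False
  then obtain j where j: "k = int j" by (metis nonneg_int_cases not_less)
  have nk: "nat (k+1) = Suc j" "nat k = j" using j by auto
  show ?thesis using gbinomial_mult_1[of "real_of_int L" j] j nk False
    by (simp add: cb_def algebra_simps)
qed

lemma cb_sym_odd: assumes "0 \<le> k" shows "cb (2*k+1) (k+1) = cb (2*k+1) k"
proof -
  have "cb (2*k+1) (k+1) = real (nat (2*k+1) choose nat (k+1))" using assms by (simp add: cb_nat)
  also have "nat (2*k+1) choose nat (k+1) = nat (2*k+1) choose (nat (2*k+1) - nat (k+1))"
    by (rule binomial_symmetric) (use assms in simp)
  also have "nat (2*k+1) - nat (k+1) = nat k" using assms by simp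
  also have "real (nat (2*k+1) choose nat k) = cb (2*k+1) k" using assms by (simp add: cb_nat)
  finally show ?thesis .
qed

lemma final_alg: fixes k :: int assumes "0 \<le> k"
  shows "real_of_int k * (real_of_int k + 3) * (cb (2*k+3) (k+1) - cb (2*k+3) k)
     = 4 * (2 * real_of_int k + 3) * cb (2*k+1) (k-1)"
proof -
  define L where "L = 2*k+1"
  have x1: "cb (2*k+3) (k+1) = cb L (k+1) + 2 * cb L k + cb L (k-1)"
    using cb2[of "2*k+3" L "k+1"] unfolding L_def by simp
  have x2: "cb (2*k+3) k = cb L k + 2 * cb L (k-1) + cb L (k-2)"
    using cb2[of "2*k+3" L "k"] unfolding L_def by simp
  have s: "cb L (k+1) = cb L k" unfolding L_def by (rule cb_sym_odd[OF assms])
  have r1: "real_of_int k * cb L k = (real_of_int k + 2) * cb L (k-1)"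
    using cb_ratio[of "k-1" L] unfolding L_def by (simp add: algebra_simps)
  have r2: "(real_of_int k - 1) * cb L (k-1) = (real_of_int k + 3) * cb L (k-2)"
    using cb_ratio[of "k-2" L] unfolding L_def by (simp add: algebra_simps)
  define r where "r = real_of_int k"
  define a where "a = cb L k"
  define b where "b = cb L (k-1)"
  define d where "d = cb L (k-2)"
  have r1': "r * a = (r+2) * b" using r1 unfolding r_def a_def b_def .
  have r2': "(r - 1) * b = (r+3) * d" using r2 unfolding r_def b_def d_def .
  have "r * (r+3) * ((a + 2*a + b) - (a + 2*b + d)) = 2*(r+3)*(r*a) - r*(r+3)*b - r*((r+3)*d)"
    by (simp add: algebra_simps)
  also have "\<dots> = 2*(r+3)*((r+2)*b) - r*(r+3)*b - r*((r-1)*b)" using r1' r2' by simp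
  also have "\<dots> = 4 * (2*r+3) * b" by (simp add: algebra_simps)
  finally have "r * (r+3) * ((a + 2*a + b) - (a + 2*b + d)) = 4 * (2*r+3) * b" .
  then show ?thesis using x1 x2 cb_sym_odd[OF assms] unfolding r_def a_def b_def d_def L_def by simp
qed



lemma ht_nsteps: "ht P = int (nsteps U P) - int (nsteps D P)"
proof (induction P)
  case Nil then show ?case by simp
next
  case (Cons x P) then show ?case by (cases x) simp_all
qed

lemma len_nsteps: "length P = nsteps U P + nsteps D P + nsteps Hu P + nsteps Hd P"
proof (induction P)
  case Nil then show ?case by simp
next
  case (Cons x P) then show ?case by (cases x) simp_all
qed

lemma vld_rep: "vld s (Suc 0) (replicate j Hu @ [D])"
  by (induction j) simp_all

lemma sum_motz: fixes g :: "step list \<Rightarrow> real"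
  shows "sum g (motz12 (Suc m)) = sum (\<lambda>P. g (U#P)) (S False 1 m)"
  unfolding motz12_S sum_S_Suc by simp

lemma motz_DU: "P \<in> motz12 n \<Longrightarrow> nsteps D P = nsteps U P"
  unfolding motz12_def using ht_nsteps[of P] by auto

lemma motz_len: "P \<in> motz12 n \<Longrightarrow> length P = n"
  unfolding motz12_def by auto

theorem mainTheorem13:
  fixes n :: nat
  assumes "n \<ge> 3"
  shows "expected_steps U n = (real n ^ 2 + real n - 6) / (4 * real n - 6)
    \<and> expected_steps D n = (real n ^ 2 + real n - 6) / (4 * real n - 6)
    \<and> expected_steps Hu n = (real n ^ 2 - 4 * real n + 6) / (4 * real n - 6)
    \<and> expected_steps Hd n = (real n ^ 2 - 4 * real n + 6) / (4 * real n - 6)"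
proof -
  define m where "m = n - 1"
  have nm: "n = Suc m" using assms unfolding m_def by simp
  define k where "k = int n - 3"
  have k0: "0 \<le> k" using assms unfolding k_def by simp
  have hx: "int m = k + 2" using assms unfolding k_def m_def by simp
  have rn: "real n = real_of_int k + 3" unfolding k_def using assms by simp
  define C where "C = real (card (motz12 n))"
  define SU where "SU = (\<Sum>P\<in>motz12 n. real (nsteps U P))"
  note s0 = state0[of 1 m, simplified]
  have C1: "C = cnt False 1 m" unfolding C_def cnt_def nm
    using sum_motz[of "\<lambda>_. 1" m] by simp
  have C2: "C = cb (2*k+3) (k+1) - cb (2*k+3) k"
    using C1 s0 hx unfolding fN0_def by (simp add: algebra_simps)
  have SU1: "SU = su False 1 m + cnt False 1 m" unfolding SU_def su_def cnt_def nm
    using sum_motz[of "\<lambda>P. real (nsteps U P)" m] by (simp add: sum.distrib)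
  have SU2: "SU = 2 * cb (2*k+1) (k-1) + C"
    using SU1 C1 s0 hx unfolding fU0_def by (simp add: algebra_simps)
  have mem: "U # replicate (m - 1) Hu @ [D] \<in> motz12 n"
    unfolding motz12_S S_def using nm assms vld_rep by simp
  have "card (motz12 n) > 0"
    using mem[unfolded motz12_S] unfolding motz12_S card_gt_0_iff by auto
  then have Cpos: "C > 0" unfolding C_def by simp
  have key: "real_of_int k * (real_of_int k + 3) * C = 4 * (2 * real_of_int k + 3) * cb (2*k+1) (k-1)"
    using final_alg[OF k0] C2 by simp
  have den: "4 * real n - 6 > 0" using rn k0 by simp
  have EU: "SU / C = (real n ^ 2 + real n - 6) / (4 * real n - 6)"
  proof -
    have "SU * (4 * real n - 6) = C * (real n ^ 2 + real n - 6)"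
      using key SU2 rn by (simp add: algebra_simps power2_eq_square)
    then show ?thesis using Cpos den by (simp add: field_simps)
  qed
  have eU: "expected_steps U n = SU / C" unfolding expected_steps_def SU_def C_def ..
  have eD: "expected_steps D n = SU / C" unfolding expected_steps_def SU_def C_def
    using motz_DU by (simp cong: sum.cong)
  have DL: "(\<Sum>P\<in>motz12 n. real (nsteps Hd P) - real (nsteps Hu P)) = 0"
    using sum_motz[of "\<lambda>P. real (nsteps Hd P) - real (nsteps Hu P)" m] s0 nm
    unfolding dl_def by simp
  have LEN: "(\<Sum>P\<in>motz12 n. real (nsteps Hu P) + real (nsteps Hd P)) = real n * C - 2 * SU"
  proof -
    have "(\<Sum>P\<in>motz12 n. real (nsteps Hu P) + real (nsteps Hd P))
        = (\<Sum>P\<in>motz12 n. real n - 2 * real (nsteps U P))"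
    proof (rule sum.cong)
      fix P assume P: "P \<in> motz12 n"
      show "real (nsteps Hu P) + real (nsteps Hd P) = real n - 2 * real (nsteps U P)"
        using len_nsteps[of P] motz_len[OF P] motz_DU[OF P] by simp
    qed simp
    also have "\<dots> = real n * C - 2 * SU"
      unfolding C_def SU_def by (simp add: sum_subtractf sum_distrib_left)
    finally show ?thesis .
  qed
  define SH where "SH = (\<Sum>P\<in>motz12 n. real (nsteps Hu P))"
  define SD where "SD = (\<Sum>P\<in>motz12 n. real (nsteps Hd P))"
  have "SD - SH = 0" using DL unfolding SD_def SH_def by (simp add: sum_subtractf)
  moreover have "SH + SD = real n * C - 2 * SU" using LEN unfolding SD_def SH_def by (simp add: sum.distrib)
  ultimately have SH: "SH = (real n * C - 2 * SU) / 2" and SD: "SD = (real n * C - 2 * SU) / 2" by auto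
  have EH: "(real n * C - 2 * SU) / 2 / C = (real n ^ 2 - 4 * real n + 6) / (4 * real n - 6)"
  proof -
    have "(real n * C - 2 * SU) / 2 / C = real n / 2 - SU / C" using Cpos by (simp add: field_simps)
    also have "\<dots> = (real n ^ 2 - 4 * real n + 6) / (4 * real n - 6)"
      unfolding EU using den by (simp add: field_simps power2_eq_square)
    finally show ?thesis .
  qed
  have eHu: "expected_steps Hu n = SH / C" unfolding expected_steps_def SH_def C_def ..
  have eHd: "expected_steps Hd n = SD / C" unfolding expected_steps_def SD_def C_def ..
  show ?thesis using eU eD eHu eHd EU EH SH SD by simp
qed

end
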